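(* (a) Let $R$ be a commutative ring and $\mathfrak{a}\subseteq R$ an idempotent ideal. Then every $R$-module is of bounded small $\mathfrak{a}$-torsion. However, there exist a commutative ring $R$, an idempotent ideal $\mathfrak{a}$ and an $R$-module that is not of bounded large $\mathfrak{a}$-torsion; and there exist a commutative ring $R$ and an idempotent ideal $\mathfrak{a}$ such that the $R$-module $R$ is not of strongly bounded small $\mathfrak{a}$-torsion. (b) Let $R$ be a commutative ring and $\mathfrak{a}\subseteq R$ an ideal generated by idempotent elements. Then every $R$-module is of strongly bounded large $\mathfrak{a}$-torsion.
   Context: $\Gamma_\mathfrak{a}(M)=\{x\in M\mid \exists n\in\mathbb{N}:\mathfrak{a}^n\subseteq(0:_Rx)\}$, $\overline{\Gamma}_\mathfrak{a}(M)=\{x\in M\mid \mathfrak{a}\subseteq\sqrt{(0:_Rx)}\}$. An $R$-module $M$ is of strongly bounded large (resp. small) $\mathfrak{a}$-torsion if there is $n\in\mathbb{N}$ with $\mathfrak{a}^nM\cap\overline{\Gamma}_\mathfrak{a}(M)=0$ (resp. $\mathfrak{a}^nM\cap\Gamma_\mathfrak{a}(M)=0$), and of bounded large (resp. small) $\mathfrak{a}$-torsion if there is $n\in\mathbb{N}$ with $\mathfrak{a}^n\overline{\Gamma}_\mathfrak{a}(M)=0$ (resp. $\mathfrak{a}^n\Gamma_\mathfrak{a}(M)=0$). Idempotent means $\mathfrak{a}^2=\mathfrak{a}$. *)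

theory Defs
  imports "HOL-Algebra.Module" "HOL-Algebra.Ideal_Product"
begin

primrec ideal_power :: "('a, 'b) ring_scheme \<Rightarrow> 'a set \<Rightarrow> nat \<Rightarrow> 'a set" where
  "ideal_power R I 0 = carrier R"
| "ideal_power R I (Suc n) = ideal_prod R I (ideal_power R I n)"

definition idempotent_ideal :: "('a, 'b) ring_scheme \<Rightarrow> 'a set \<Rightarrow> bool" where
  "idempotent_ideal R I \<longleftrightarrow> ideal I R \<and> ideal_prod R I I = I"

definition generated_by_idempotents :: "('a, 'b) ring_scheme \<Rightarrow> 'a set \<Rightarrow> bool" where
  "generated_by_idempotents R I \<longleftrightarrow>
     (\<exists>S. S \<subseteq> carrier R \<and> (\<forall>e\<in>S. e \<otimes>\<^bsub>R\<^esub> e = e) \<and> I = genideal R S)"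

definition annihilator :: "('a, 'c) ring_scheme \<Rightarrow> ('a, 'b, 'd) module_scheme \<Rightarrow> 'b \<Rightarrow> 'a set" where
  "annihilator R M x = {r \<in> carrier R. r \<odot>\<^bsub>M\<^esub> x = \<zero>\<^bsub>M\<^esub>}"

definition radical :: "('a, 'b) ring_scheme \<Rightarrow> 'a set \<Rightarrow> 'a set" where
  "radical R J = {r \<in> carrier R. \<exists>n::nat. r [^]\<^bsub>R\<^esub> n \<in> J}"

definition small_torsion :: "('a, 'c) ring_scheme \<Rightarrow> 'a set \<Rightarrow> ('a, 'b, 'd) module_scheme \<Rightarrow> 'b set" where
  "small_torsion R I M = {x \<in> carrier M. \<exists>n::nat. ideal_power R I n \<subseteq> annihilator R M x}"

definition large_torsion :: "('a, 'c) ring_scheme \<Rightarrow> 'a set \<Rightarrow> ('a, 'b, 'd) module_scheme \<Rightarrow> 'b set" where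
  "large_torsion R I M = {x \<in> carrier M. I \<subseteq> radical R (annihilator R M x)}"

definition ideal_smult :: "('a, 'c) ring_scheme \<Rightarrow> 'a set \<Rightarrow> ('a, 'b, 'd) module_scheme \<Rightarrow> 'b set \<Rightarrow> 'b set" where
  "ideal_smult R I M N =
     \<Inter>{L. submodule L R M \<and> {r \<odot>\<^bsub>M\<^esub> x | r x. r \<in> I \<and> x \<in> N} \<subseteq> L}"

definition strongly_bounded_large_torsion ::
  "('a, 'c) ring_scheme \<Rightarrow> 'a set \<Rightarrow> ('a, 'b, 'd) module_scheme \<Rightarrow> bool" where
  "strongly_bounded_large_torsion R I M \<longleftrightarrow>
     (\<exists>n::nat. ideal_smult R (ideal_power R I n) M (carrier M) \<inter> large_torsion R I M = {\<zero>\<^bsub>M\<^esub>})"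

definition strongly_bounded_small_torsion ::
  "('a, 'c) ring_scheme \<Rightarrow> 'a set \<Rightarrow> ('a, 'b, 'd) module_scheme \<Rightarrow> bool" where
  "strongly_bounded_small_torsion R I M \<longleftrightarrow>
     (\<exists>n::nat. ideal_smult R (ideal_power R I n) M (carrier M) \<inter> small_torsion R I M = {\<zero>\<^bsub>M\<^esub>})"

definition bounded_large_torsion ::
  "('a, 'c) ring_scheme \<Rightarrow> 'a set \<Rightarrow> ('a, 'b, 'd) module_scheme \<Rightarrow> bool" where
  "bounded_large_torsion R I M \<longleftrightarrow>
     (\<exists>n::nat. ideal_smult R (ideal_power R I n) M (large_torsion R I M) = {\<zero>\<^bsub>M\<^esub>})"

definition bounded_small_torsion ::
  "('a, 'c) ring_scheme \<Rightarrow> 'a set \<Rightarrow> ('a, 'b, 'd) module_scheme \<Rightarrow> bool" where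
  "bounded_small_torsion R I M \<longleftrightarrow>
     (\<exists>n::nat. ideal_smult R (ideal_power R I n) M (small_torsion R I M) = {\<zero>\<^bsub>M\<^esub>})"

end

theory Submission
  imports Defs "HOL-Library.Poly_Mapping" "HOL-Library.Countable"
begin


lemma ismult_gen: "r \<in> J \<Longrightarrow> x \<in> N \<Longrightarrow> r \<odot>\<^bsub>M\<^esub> x \<in> ideal_smult R J M N"
  unfolding ideal_smult_def by blast

lemma ismult_min: "submodule L R M \<Longrightarrow> (\<And>r x. r \<in> J \<Longrightarrow> x \<in> N \<Longrightarrow> r \<odot>\<^bsub>M\<^esub> x \<in> L)
   \<Longrightarrow> ideal_smult R J M N \<subseteq> L"
  unfolding ideal_smult_def by blast

lemma ismult_zero: "\<zero>\<^bsub>M\<^esub> \<in> ideal_smult R J M N"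
  unfolding ideal_smult_def
proof (intro InterI, clarify)
  fix L assume "submodule L R M"
  then have "subgroup L (add_monoid M)" by (rule submodule.axioms(1))
  from subgroup.one_closed[OF this] show "\<zero>\<^bsub>M\<^esub> \<in> L" by simp
qed

lemma (in ring) ideal_prod_sub_left:
  assumes J: "J \<subseteq> carrier R" and I: "ideal I R"
  shows "ideal_prod R I J \<subseteq> I"
proof
  fix s assume "s \<in> ideal_prod R I J"
  then show "s \<in> I"
  proof (induct s rule: ideal_prod.induct)
    case (prod i j) then show ?case using ideal.I_r_closed[OF I, of i j] J by auto
  next
    case (sum s1 s2) then show ?case
      using additive_subgroup.a_closed[OF ideal.axioms(1)[OF I], of s1 s2] by simp
  qed
qed

lemma (in ring) ideal_power_carrier: "ideal I R \<Longrightarrow> ideal_power R I n \<subseteq> carrier R"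
proof (induct n)
  case 0 then show ?case by simp
next
  case (Suc n) then show ?case using ideal_prod_sub_left[of "ideal_power R I n" I] ideal.Icarr
    by fastforce
qed

lemma (in ring) ideal_power_sub: "ideal I R \<Longrightarrow> ideal_power R I (Suc n) \<subseteq> I"
  using ideal_power_carrier ideal_prod_sub_left by simp

lemma (in ring) ideal_power_idem: "idempotent_ideal R I \<Longrightarrow> ideal_power R I (Suc n) = I"
proof (induct n)
  case 0 then show ?case by (simp add: idempotent_ideal_def ideal_prod_one)
next
  case (Suc n) then show ?case by (simp add: idempotent_ideal_def)
qed

lemma part_a1:
  assumes "module R M" "idempotent_ideal R I"
  shows "bounded_small_torsion R I M"
proof -
  interpret module R M by fact
  have II: "ideal_power R I (Suc 0) = I" using ideal_power_idem assms(2) by blast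
  have "ideal_smult R (ideal_power R I 1) M (small_torsion R I M) \<subseteq> {\<zero>\<^bsub>M\<^esub>}"
  proof (rule ismult_min)
    show "submodule {\<zero>\<^bsub>M\<^esub>} R M"
      by (rule submoduleI) auto
  next
    fix r x assume r: "r \<in> ideal_power R I 1" and x: "x \<in> small_torsion R I M"
    have rI: "r \<in> I" using r II by simp
    have "ideal I R" using assms(2) unfolding idempotent_ideal_def by simp
    then have rc: "r \<in> carrier R" using rI by (rule ideal.Icarr)
    from x obtain n where xc: "x \<in> carrier M" and n: "ideal_power R I n \<subseteq> annihilator R M x"
      unfolding small_torsion_def by blast
    show "r \<odot>\<^bsub>M\<^esub> x \<in> {\<zero>\<^bsub>M\<^esub>}"
    proof (cases n)
      case 0
      then have "\<one>\<^bsub>R\<^esub> \<odot>\<^bsub>M\<^esub> x = \<zero>\<^bsub>M\<^esub>" using n unfolding annihilator_def by auto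
      then have "x = \<zero>\<^bsub>M\<^esub>" using xc by simp
      then show ?thesis using rc by simp
    next
      case (Suc m)
      then have "ideal_power R I n = I" using ideal_power_idem assms(2) by blast
      then show ?thesis using n rI unfolding annihilator_def by auto
    qed
  qed
  then have "ideal_smult R (ideal_power R I 1) M (small_torsion R I M) = {\<zero>\<^bsub>M\<^esub>}"
    using ismult_zero[of M R "ideal_power R I 1" "small_torsion R I M"] by blast
  then show ?thesis unfolding bounded_small_torsion_def by (rule exI)
qed



lemma (in cring) idem_comb:
  assumes e1: "e1 \<in> carrier R" "e1 \<otimes> e1 = e1" and e2: "e2 \<in> carrier R" "e2 \<otimes> e2 = e2"
  shows "(e1 \<oplus> e2 \<oplus> \<ominus>(e1 \<otimes> e2)) \<otimes> (e1 \<oplus> e2 \<oplus> \<ominus>(e1 \<otimes> e2)) = e1 \<oplus> e2 \<oplus> \<ominus>(e1 \<otimes> e2)"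
proof -
  have "(e1 \<oplus> e2 \<oplus> \<ominus>(e1 \<otimes> e2)) \<otimes> (e1 \<oplus> e2 \<oplus> \<ominus>(e1 \<otimes> e2)) =
     (e1 \<otimes> e1) \<oplus> (e2 \<otimes> e2) \<oplus> ((e1\<otimes>e1) \<otimes> (e2 \<otimes> e2)) \<oplus> (e1 \<otimes> e2) \<oplus> (e1 \<otimes> e2)
      \<oplus> \<ominus>((e1\<otimes>e1) \<otimes> e2) \<oplus> \<ominus>((e1\<otimes>e1) \<otimes> e2) \<oplus> \<ominus>(e1 \<otimes> (e2 \<otimes> e2)) \<oplus> \<ominus>(e1 \<otimes> (e2 \<otimes> e2))"
    using e1(1) e2(1) by algebra
  also have "\<dots> = e1 \<oplus> e2 \<oplus> (e1 \<otimes> e2) \<oplus> (e1 \<otimes> e2) \<oplus> (e1 \<otimes> e2)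
      \<oplus> \<ominus>(e1 \<otimes> e2) \<oplus> \<ominus>(e1 \<otimes> e2) \<oplus> \<ominus>(e1 \<otimes> e2) \<oplus> \<ominus>(e1 \<otimes> e2)"
    by (simp only: e1(2) e2(2))
  also have "\<dots> = e1 \<oplus> e2 \<oplus> \<ominus>(e1 \<otimes> e2)" using e1(1) e2(1) by algebra
  finally show ?thesis .
qed

lemma (in cring) idem_comb_fix:
  assumes e1: "e1 \<in> carrier R" and e2: "e2 \<in> carrier R" and a: "a \<in> carrier R" and h: "e1 \<otimes> a = a"
  shows "(e1 \<oplus> e2 \<oplus> \<ominus>(e1 \<otimes> e2)) \<otimes> a = a"
proof -
  have "(e1 \<oplus> e2 \<oplus> \<ominus>(e1 \<otimes> e2)) \<otimes> a = e1 \<otimes> a \<oplus> e2 \<otimes> a \<oplus> \<ominus>(e2 \<otimes> (e1 \<otimes> a))"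
    using e1 e2 a by algebra
  also have "\<dots> = a" using h e1 e2 a by algebra
  finally show ?thesis .
qed

lemma (in cring) idem_comb_fix2:
  assumes e1: "e1 \<in> carrier R" and e2: "e2 \<in> carrier R" and a: "a \<in> carrier R" and h: "e2 \<otimes> a = a"
  shows "(e1 \<oplus> e2 \<oplus> \<ominus>(e1 \<otimes> e2)) \<otimes> a = a"
proof -
  have "(e1 \<oplus> e2 \<oplus> \<ominus>(e1 \<otimes> e2)) \<otimes> a = e1 \<otimes> a \<oplus> e2 \<otimes> a \<oplus> \<ominus>(e1 \<otimes> (e2 \<otimes> a))"
    using e1 e2 a by algebra
  also have "\<dots> = a" using h e1 e2 a by algebra
  finally show ?thesis .
qed


lemma (in module) idem_comb_smult:
  assumes e1: "e1 \<in> carrier R" and e2: "e2 \<in> carrier R" and y: "y \<in> carrier M"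
    and h: "e1 \<odot>\<^bsub>M\<^esub> y = y"
  shows "(e1 \<oplus> e2 \<oplus> \<ominus>(e1 \<otimes> e2)) \<odot>\<^bsub>M\<^esub> y = y"
proof -
  have "(e1 \<oplus> e2 \<oplus> \<ominus>(e1 \<otimes> e2)) \<odot>\<^bsub>M\<^esub> y
      = e1 \<odot>\<^bsub>M\<^esub> y \<oplus>\<^bsub>M\<^esub> e2 \<odot>\<^bsub>M\<^esub> y \<oplus>\<^bsub>M\<^esub> \<ominus>\<^bsub>M\<^esub> (e2 \<odot>\<^bsub>M\<^esub> (e1 \<odot>\<^bsub>M\<^esub> y))"
    using e1 e2 y by (simp add: smult_l_distr smult_l_minus smult_assoc1[symmetric] m_comm)
  also have "\<dots> = y" using h e1 e2 y
    by (simp add: M.add.m_assoc M.r_neg)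
  finally show ?thesis .
qed

lemma part_b:
  assumes M: "module R M" and I: "ideal I R" and g: "generated_by_idempotents R I"
  shows "strongly_bounded_large_torsion R I M"
proof -
  interpret module R M by fact
  obtain S where S: "S \<subseteq> carrier R" "\<forall>e\<in>S. e \<otimes>\<^bsub>R\<^esub> e = e" "I = genideal R S"
    using g unfolding generated_by_idempotents_def by blast
  have SI: "S \<subseteq> I" unfolding S(3) by (rule genideal_self[OF S(1)])
  have Ic: "\<And>x. x \<in> I \<Longrightarrow> x \<in> carrier R" by (rule ideal.Icarr[OF I])
  have Iclosed: "\<And>x y. x \<in> I \<Longrightarrow> y \<in> I \<Longrightarrow> x \<oplus>\<^bsub>R\<^esub> y \<oplus>\<^bsub>R\<^esub> \<ominus>\<^bsub>R\<^esub> (x \<otimes>\<^bsub>R\<^esub> y) \<in> I"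
  proof -
    fix x y assume x: "x \<in> I" and y: "y \<in> I"
    interpret ideal I R by fact
    have "x \<otimes>\<^bsub>R\<^esub> y \<in> I" using x Ic[OF y] by (rule I_r_closed)
    then show "x \<oplus>\<^bsub>R\<^esub> y \<oplus>\<^bsub>R\<^esub> \<ominus>\<^bsub>R\<^esub> (x \<otimes>\<^bsub>R\<^esub> y) \<in> I"
      using x y by (simp add: a_closed a_inv_closed)
  qed
  define A where "A = {a \<in> carrier R. \<exists>e\<in>I. e \<otimes>\<^bsub>R\<^esub> e = e \<and> e \<otimes>\<^bsub>R\<^esub> a = a}"
  have "ideal A R"
  proof (rule idealI)
    show "ring R" by (rule ring_axioms)
  next
    show "subgroup A (add_monoid R)"
    proof (rule subgroup.intro)
      show "A \<subseteq> carrier (add_monoid R)" unfolding A_def by auto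
    next
      fix a b assume a: "a \<in> A" and b: "b \<in> A"
      then obtain e1 e2 where e1: "e1 \<in> I" "e1 \<otimes>\<^bsub>R\<^esub> e1 = e1" "e1 \<otimes>\<^bsub>R\<^esub> a = a"
        and e2: "e2 \<in> I" "e2 \<otimes>\<^bsub>R\<^esub> e2 = e2" "e2 \<otimes>\<^bsub>R\<^esub> b = b"
        and ac: "a \<in> carrier R" and bc: "b \<in> carrier R"
        unfolding A_def by blast
      let ?e = "e1 \<oplus>\<^bsub>R\<^esub> e2 \<oplus>\<^bsub>R\<^esub> \<ominus>\<^bsub>R\<^esub> (e1 \<otimes>\<^bsub>R\<^esub> e2)"
      have "?e \<in> I" using Iclosed e1(1) e2(1) .
      moreover have "?e \<otimes>\<^bsub>R\<^esub> ?e = ?e" using idem_comb Ic e1 e2 by simp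
      moreover have "?e \<otimes>\<^bsub>R\<^esub> (a \<oplus>\<^bsub>R\<^esub> b) = a \<oplus>\<^bsub>R\<^esub> b"
        using idem_comb_fix[of e1 e2 a] idem_comb_fix2[of e1 e2 b] Ic e1 e2 ac bc
        by (simp add: r_distr)
      ultimately show "a \<otimes>\<^bsub>add_monoid R\<^esub> b \<in> A" using ac bc unfolding A_def by auto
    next
      have "\<zero>\<^bsub>R\<^esub> \<in> I" by (rule additive_subgroup.zero_closed[OF ideal.axioms(1)[OF I]])
      then show "\<one>\<^bsub>add_monoid R\<^esub> \<in> A" unfolding A_def by force
    next
      fix a assume a: "a \<in> A"
      then obtain e1 where e1: "e1 \<in> I" "e1 \<otimes>\<^bsub>R\<^esub> e1 = e1" "e1 \<otimes>\<^bsub>R\<^esub> a = a"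
        and ac: "a \<in> carrier R" unfolding A_def by blast
      have "e1 \<otimes>\<^bsub>R\<^esub> (\<ominus>\<^bsub>R\<^esub> a) = \<ominus>\<^bsub>R\<^esub> a"
        using e1 ac Ic[OF e1(1)] by (simp add: r_minus)
      then show "inv\<^bsub>add_monoid R\<^esub> a \<in> A" using e1 ac unfolding A_def
        by (auto simp: a_inv_def[symmetric])
    qed
  next
    fix a x assume a: "a \<in> A" and x: "x \<in> carrier R"
    then obtain e1 where e1: "e1 \<in> I" "e1 \<otimes>\<^bsub>R\<^esub> e1 = e1" "e1 \<otimes>\<^bsub>R\<^esub> a = a"
      and ac: "a \<in> carrier R" unfolding A_def by blast
    have "e1 \<otimes>\<^bsub>R\<^esub> (x \<otimes>\<^bsub>R\<^esub> a) = x \<otimes>\<^bsub>R\<^esub> a"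
      using e1 ac x Ic[OF e1(1)] by (metis m_lcomm)
    then show "x \<otimes>\<^bsub>R\<^esub> a \<in> A" using e1 ac x unfolding A_def by auto
    then show "a \<otimes>\<^bsub>R\<^esub> x \<in> A" using ac x by (simp add: m_comm)
  qed
  moreover have "S \<subseteq> A"
  proof
    fix s assume s: "s \<in> S"
    then show "s \<in> A" unfolding A_def using S(1,2) SI by auto
  qed
  ultimately have IA: "I \<subseteq> A" using S(3) genideal_minimal by simp
  define N where "N = {y \<in> carrier M. \<exists>e\<in>I. e \<otimes>\<^bsub>R\<^esub> e = e \<and> e \<odot>\<^bsub>M\<^esub> y = y}"
  have "ideal_smult R (ideal_power R I 1) M (carrier M) \<subseteq> N"
  proof (rule ismult_min)
    show "submodule N R M"
    proof (rule submoduleI)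
      show "N \<subseteq> carrier M" unfolding N_def by auto
    next
      have "\<zero>\<^bsub>R\<^esub> \<in> I" by (rule additive_subgroup.zero_closed[OF ideal.axioms(1)[OF I]])
      then show "\<zero>\<^bsub>M\<^esub> \<in> N" unfolding N_def by force
    next
      fix a assume a: "a \<in> N"
      then obtain e1 where e1: "e1 \<in> I" "e1 \<otimes>\<^bsub>R\<^esub> e1 = e1" "e1 \<odot>\<^bsub>M\<^esub> a = a"
        and ac: "a \<in> carrier M" unfolding N_def by blast
      have "e1 \<odot>\<^bsub>M\<^esub> (\<ominus>\<^bsub>M\<^esub> a) = \<ominus>\<^bsub>M\<^esub> a"
        using e1 ac Ic[OF e1(1)] by (simp add: smult_r_minus)
      then show "\<ominus>\<^bsub>M\<^esub> a \<in> N" using e1 ac unfolding N_def by auto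
    next
      fix a b assume a: "a \<in> N" and b: "b \<in> N"
      then obtain e1 e2 where e1: "e1 \<in> I" "e1 \<otimes>\<^bsub>R\<^esub> e1 = e1" "e1 \<odot>\<^bsub>M\<^esub> a = a"
        and e2: "e2 \<in> I" "e2 \<otimes>\<^bsub>R\<^esub> e2 = e2" "e2 \<odot>\<^bsub>M\<^esub> b = b"
        and ac: "a \<in> carrier M" and bc: "b \<in> carrier M"
        unfolding N_def by blast
      let ?e = "e1 \<oplus>\<^bsub>R\<^esub> e2 \<oplus>\<^bsub>R\<^esub> \<ominus>\<^bsub>R\<^esub> (e1 \<otimes>\<^bsub>R\<^esub> e2)"
      have ee: "?e = e2 \<oplus>\<^bsub>R\<^esub> e1 \<oplus>\<^bsub>R\<^esub> \<ominus>\<^bsub>R\<^esub> (e2 \<otimes>\<^bsub>R\<^esub> e1)"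
        using Ic e1(1) e2(1) by algebra
      have "?e \<in> I" using Iclosed e1(1) e2(1) .
      moreover have "?e \<otimes>\<^bsub>R\<^esub> ?e = ?e" using idem_comb Ic e1 e2 by simp
      moreover have "?e \<odot>\<^bsub>M\<^esub> a = a" using idem_comb_smult[of e1 e2 a] Ic e1 e2 ac by simp
      moreover have "?e \<odot>\<^bsub>M\<^esub> b = b" unfolding ee using idem_comb_smult[of e2 e1 b] Ic e1 e2 bc by simp
      moreover have "?e \<in> carrier R" using Ic \<open>?e \<in> I\<close> by blast
      ultimately show "a \<oplus>\<^bsub>M\<^esub> b \<in> N" using ac bc unfolding N_def
        by (auto simp: smult_r_distr intro!: bexI[of _ ?e])
    next
      fix r a assume r: "r \<in> carrier R" and a: "a \<in> N"
      then obtain e1 where e1: "e1 \<in> I" "e1 \<otimes>\<^bsub>R\<^esub> e1 = e1" "e1 \<odot>\<^bsub>M\<^esub> a = a"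
        and ac: "a \<in> carrier M" unfolding N_def by blast
      have "e1 \<odot>\<^bsub>M\<^esub> (r \<odot>\<^bsub>M\<^esub> a) = r \<odot>\<^bsub>M\<^esub> a"
        using e1 ac r Ic[OF e1(1)] by (metis smult_assoc1 m_comm)
      then show "r \<odot>\<^bsub>M\<^esub> a \<in> N" using e1 ac r unfolding N_def by auto
    qed
  next
    fix r x assume r: "r \<in> ideal_power R I 1" and x: "x \<in> carrier M"
    have "r \<in> I" using r ideal_power_sub[OF I, of 0] by auto
    then have "r \<in> A" using IA by auto
    then obtain e1 where e1: "e1 \<in> I" "e1 \<otimes>\<^bsub>R\<^esub> e1 = e1" "e1 \<otimes>\<^bsub>R\<^esub> r = r"
      and rc: "r \<in> carrier R" unfolding A_def by blast
    have "e1 \<odot>\<^bsub>M\<^esub> (r \<odot>\<^bsub>M\<^esub> x) = r \<odot>\<^bsub>M\<^esub> x"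
      using e1 rc x Ic[OF e1(1)] by (metis smult_assoc1)
    then show "r \<odot>\<^bsub>M\<^esub> x \<in> N" using e1 rc x unfolding N_def by auto
  qed
  moreover have "N \<inter> large_torsion R I M \<subseteq> {\<zero>\<^bsub>M\<^esub>}"
  proof
    fix y assume y: "y \<in> N \<inter> large_torsion R I M"
    then obtain e where e: "e \<in> I" "e \<otimes>\<^bsub>R\<^esub> e = e" "e \<odot>\<^bsub>M\<^esub> y = y"
      and yc: "y \<in> carrier M" unfolding N_def by blast
    have ec: "e \<in> carrier R" using Ic e(1) .
    from y e(1) have "e \<in> radical R (annihilator R M y)" unfolding large_torsion_def by blast
    then obtain k where k: "(e [^]\<^bsub>R\<^esub> (k::nat)) \<odot>\<^bsub>M\<^esub> y = \<zero>\<^bsub>M\<^esub>"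
      unfolding radical_def annihilator_def by blast
    have pw: "e [^]\<^bsub>R\<^esub> (Suc n) = e" for n
      by (induct n) (simp_all add: ec e(2))
    show "y \<in> {\<zero>\<^bsub>M\<^esub>}"
    proof (cases k)
      case 0 then show ?thesis using k yc by simp
    next
      case (Suc n) then show ?thesis using k pw e(3) by simp
    qed
  qed
  moreover have "\<zero>\<^bsub>M\<^esub> \<in> large_torsion R I M"
  proof -
    have "x \<in> radical R (annihilator R M \<zero>\<^bsub>M\<^esub>)" if x: "x \<in> I" for x
    proof -
      have xc: "x \<in> carrier R" using Ic x .
      have "x [^]\<^bsub>R\<^esub> (1::nat) \<in> annihilator R M \<zero>\<^bsub>M\<^esub>"
        unfolding annihilator_def using xc by simp
      then show ?thesis unfolding radical_def using xc by blast
    qed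
    then show ?thesis unfolding large_torsion_def by auto
  qed
  ultimately have "ideal_smult R (ideal_power R I 1) M (carrier M) \<inter> large_torsion R I M = {\<zero>\<^bsub>M\<^esub>}"
    using ismult_zero[of M R "ideal_power R I 1" "carrier M"] by blast
  then show ?thesis unfolding strongly_bounded_large_torsion_def by (rule exI)
qed



type_synonym pm = "rat \<Rightarrow>\<^sub>0 int"

definition T :: "pm \<Rightarrow> pm" where
  "T p = Poly_Mapping.mapp (\<lambda>k v. if k \<le> 1 then v else 0) p"

lemma lookup_T: "Poly_Mapping.lookup (T p) k = (if k \<le> 1 then Poly_Mapping.lookup p k else 0)"
  unfolding T_def by (simp add: Poly_Mapping.lookup_mapp when_def in_keys_iff)

lemma T_add: "T (p + q) = T p + T q"
  by (rule poly_mapping_eqI) (simp add: lookup_T lookup_add)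

lemma T_zero: "T 0 = 0"
  by (rule poly_mapping_eqI) (simp add: lookup_T)

lemma T_minus: "T (- p) = - T p"
  by (rule poly_mapping_eqI) (simp add: lookup_T lookup_minus)

lemma keys_T: "Poly_Mapping.keys (T p) \<subseteq> Poly_Mapping.keys p \<inter> {..1}"
  by (auto simp: in_keys_iff lookup_T split: if_splits)

lemma T_id: "Poly_Mapping.keys p \<subseteq> {..1} \<Longrightarrow> T p = p"
  by (rule poly_mapping_eqI) (auto simp: lookup_T in_keys_iff)

lemma T_high: "Poly_Mapping.keys p \<subseteq> {1<..} \<Longrightarrow> T p = 0"
  by (rule poly_mapping_eqI) (auto simp: lookup_T in_keys_iff)

lemma keys_mult_ge:
  fixes p q :: pm
  assumes "\<forall>k\<in>Poly_Mapping.keys p. a \<le> k" "\<forall>k\<in>Poly_Mapping.keys q. b \<le> k"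
  shows "\<forall>k\<in>Poly_Mapping.keys (p * q). a + b \<le> k"
proof
  fix k assume "k \<in> Poly_Mapping.keys (p * q)"
  then obtain x y where "k = x + y" "x \<in> Poly_Mapping.keys p" "y \<in> Poly_Mapping.keys q"
    using keys_mult[of p q] by blast
  then show "a + b \<le> k" using assms by (simp add: add_mono)
qed

lemma keys_mult_gt:
  fixes p q :: pm
  assumes "\<forall>k\<in>Poly_Mapping.keys p. a < k" "\<forall>k\<in>Poly_Mapping.keys q. b \<le> k"
  shows "\<forall>k\<in>Poly_Mapping.keys (p * q). a + b < k"
proof
  fix k assume "k \<in> Poly_Mapping.keys (p * q)"
  then obtain x y where "k = x + y" "x \<in> Poly_Mapping.keys p" "y \<in> Poly_Mapping.keys q"
    using keys_mult[of p q] by blast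
  then show "a + b < k" using assms by (simp add: add_less_le_mono)
qed

definition NN :: "pm \<Rightarrow> bool" where "NN p \<longleftrightarrow> (\<forall>k\<in>Poly_Mapping.keys p. 0 \<le> k)"

lemma NN_mult: "NN p \<Longrightarrow> NN q \<Longrightarrow> NN (p * q)"
  unfolding NN_def using keys_mult_ge[of p 0 q 0] by simp

lemma TT: assumes "NN p" "NN q" shows "T (T p * q) = T (p * q)"
proof -
  have "p = T p + (p - T p)" by simp
  have k: "\<forall>k\<in>Poly_Mapping.keys (p - T p). 1 < k"
    by (auto simp: in_keys_iff lookup_T lookup_minus split: if_splits)
  have "\<forall>k\<in>Poly_Mapping.keys ((p - T p) * q). 1 + 0 < k"
    by (rule keys_mult_gt) (use k assms in \<open>auto simp: NN_def\<close>)
  then have "T ((p - T p) * q) = 0" by (intro T_high) auto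
  moreover have "p * q = T p * q + (p - T p) * q" by (simp add: algebra_simps)
  ultimately show ?thesis by (simp add: T_add)
qed

definition CC :: "pm set" where "CC = {p. Poly_Mapping.keys p \<subseteq> {0..1}}"

lemma CC_NN: "p \<in> CC \<Longrightarrow> NN p" unfolding CC_def NN_def by auto

lemma CC_mult: "p \<in> CC \<Longrightarrow> q \<in> CC \<Longrightarrow> T (p * q) \<in> CC"
  using keys_T[of "p*q"] NN_mult[OF CC_NN CC_NN, of p q] unfolding CC_def NN_def by fastforce

lemma CC_add: "p \<in> CC \<Longrightarrow> q \<in> CC \<Longrightarrow> p + q \<in> CC"
  using keys_add[of p q] unfolding CC_def by auto

lemma CC_minus: "p \<in> CC \<Longrightarrow> - p \<in> CC"
  unfolding CC_def by simp

lemma CC_zero: "0 \<in> CC" and CC_one: "1 \<in> CC"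
  unfolding CC_def by auto

lemma T_CC: "p \<in> CC \<Longrightarrow> T p = p"
  unfolding CC_def by (rule T_id) auto

lemma T_assoc: assumes "p \<in> CC" "q \<in> CC" "r \<in> CC"
  shows "T (T (p * q) * r) = T (p * T (q * r))"
proof -
  have "T (T (p * q) * r) = T (p * q * r)"
    using assms by (intro TT NN_mult CC_NN)
  moreover have "T (p * T (q * r)) = T (T (q * r) * p)" by (simp add: mult.commute)
  moreover have "\<dots> = T (q * r * p)" using assms by (intro TT NN_mult CC_NN)
  ultimately show ?thesis by (simp add: ac_simps)
qed

definition enc :: "pm \<Rightarrow> nat set" where "enc p = {to_nat (Poly_Mapping.items p)}"
definition dec :: "nat set \<Rightarrow> pm" where "dec X = Poly_Mapping.the_value (from_nat (the_elem X))"

lemma dec_enc [simp]: "dec (enc p) = p"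
  unfolding enc_def dec_def by simp

lemma enc_inj: "enc p = enc q \<Longrightarrow> p = q"
  by (metis dec_enc)

definition Rg :: "nat set ring" where
  "Rg = \<lparr>carrier = enc ` CC, mult = (\<lambda>x y. enc (T (dec x * dec y))), one = enc 1,
         zero = enc 0, add = (\<lambda>x y. enc (dec x + dec y))\<rparr>"

lemma Rg_simps [simp]:
  "carrier Rg = enc ` CC"
  "x \<otimes>\<^bsub>Rg\<^esub> y = enc (T (dec x * dec y))"
  "\<one>\<^bsub>Rg\<^esub> = enc 1" "\<zero>\<^bsub>Rg\<^esub> = enc 0"
  "x \<oplus>\<^bsub>Rg\<^esub> y = enc (dec x + dec y)"
  unfolding Rg_def by simp_all

lemma Rg_abelian_group: "abelian_group Rg"
proof (rule abelian_groupI)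
  fix x assume "x \<in> carrier Rg"
  then obtain p where p: "p \<in> CC" "x = enc p" by auto
  show "\<exists>y\<in>carrier Rg. y \<oplus>\<^bsub>Rg\<^esub> x = \<zero>\<^bsub>Rg\<^esub>"
    by (rule bexI[of _ "enc (- p)"]) (use p CC_minus in auto)
qed (auto simp: CC_add CC_zero add_ac intro!: imageI)

lemma Rg_comm_monoid: "comm_monoid Rg"
proof (rule comm_monoidI)
  fix x y z assume "x \<in> carrier Rg" "y \<in> carrier Rg" "z \<in> carrier Rg"
  then obtain p q r where "p \<in> CC" "q \<in> CC" "r \<in> CC" "x = enc p" "y = enc q" "z = enc r" by auto
  then show "x \<otimes>\<^bsub>Rg\<^esub> y \<otimes>\<^bsub>Rg\<^esub> z = x \<otimes>\<^bsub>Rg\<^esub> (y \<otimes>\<^bsub>Rg\<^esub> z)"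
    by (simp add: T_assoc del: Rg_simps(1))
next
  fix x y assume "x \<in> carrier Rg" "y \<in> carrier Rg"
  then show "x \<otimes>\<^bsub>Rg\<^esub> y = y \<otimes>\<^bsub>Rg\<^esub> x" by (simp add: mult.commute)
qed (auto simp: CC_mult CC_one T_CC intro!: imageI)

lemma Rg_cring: "cring Rg"
  by (rule cringI[OF Rg_abelian_group Rg_comm_monoid])
     (auto simp: distrib_right T_add)



lemma Rg_minus: "x \<in> carrier Rg \<Longrightarrow> \<ominus>\<^bsub>Rg\<^esub> x = enc (- dec x)"
proof -
  interpret R: cring Rg by (rule Rg_cring)
  assume x: "x \<in> carrier Rg"
  then obtain p where p: "p \<in> CC" "x = enc p" by auto
  show ?thesis
    by (rule R.minus_equality) (use p CC_minus in auto)
qed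

definition II :: "pm set" where "II = {p \<in> CC. \<forall>k\<in>Poly_Mapping.keys p. 0 < k}"
definition Ig :: "nat set set" where "Ig = enc ` II"

lemma II_CC: "p \<in> II \<Longrightarrow> p \<in> CC" unfolding II_def by auto

lemma II_mult: assumes "p \<in> II" "q \<in> CC" shows "T (p * q) \<in> II"
proof -
  have "\<forall>k\<in>Poly_Mapping.keys (p * q). 0 + 0 < k"
    by (rule keys_mult_gt) (use assms in \<open>auto simp: II_def CC_def\<close>)
  then show ?thesis using keys_T[of "p*q"] CC_mult[OF II_CC[OF assms(1)] assms(2)]
    unfolding II_def by auto
qed

lemma Ig_ideal: "ideal Ig Rg"
proof -
  interpret R: cring Rg by (rule Rg_cring)
  have sub: "Ig \<subseteq> carrier Rg" unfolding Ig_def II_def by auto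
  show ?thesis
  proof (rule idealI)
    show "ring Rg" by (rule R.ring_axioms)
  next
    show "subgroup Ig (add_monoid Rg)"
    proof (rule R.add.subgroupI, goal_cases)
      case 1 show ?case using sub by simp
    next
      case 2
      have "0 \<in> II" unfolding II_def using CC_zero by auto
      then show ?case unfolding Ig_def by auto
    next
      case (3 a)
      then obtain p where p: "p \<in> II" "a = enc p" unfolding Ig_def by auto
      have "- p \<in> II" using p(1) unfolding II_def CC_def by auto
      then have "\<ominus>\<^bsub>Rg\<^esub> a \<in> Ig" using Rg_minus[of a] 3 sub p unfolding Ig_def by auto
      then show ?case by (simp add: a_inv_def)
    next
      case (4 a b)
      then obtain p q where p: "p \<in> II" "a = enc p" "q \<in> II" "b = enc q" unfolding Ig_def by auto
      have "p + q \<in> II" using p keys_add[of p q] unfolding II_def CC_def by auto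
      then show ?case using p unfolding Ig_def by simp
    qed
  next
    fix a x assume "a \<in> Ig" "x \<in> carrier Rg"
    then obtain p q where p: "p \<in> II" "a = enc p" "q \<in> CC" "x = enc q" unfolding Ig_def by auto
    show "a \<otimes>\<^bsub>Rg\<^esub> x \<in> Ig" using II_mult[OF p(1) p(3)] p unfolding Ig_def by simp
    show "x \<otimes>\<^bsub>Rg\<^esub> a \<in> Ig" using II_mult[OF p(1) p(3)] p unfolding Ig_def by (simp add: mult.commute)
  qed
qed



lemma II_zero: "0 \<in> II" unfolding II_def using CC_zero by auto

lemma II_split: assumes p: "p \<in> II" shows "\<exists>a\<in>II. \<exists>b\<in>II. T (a * b) = p"
proof (cases "p = 0")
  case True then show ?thesis using II_zero by (intro bexI[of _ 0]) (auto simp: T_zero)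
next
  case False
  then have ne: "Poly_Mapping.keys p \<noteq> {}" by simp
  define q0 where "q0 = Min (Poly_Mapping.keys p)"
  have q0k: "q0 \<in> Poly_Mapping.keys p" unfolding q0_def using ne by simp
  have q0le: "\<forall>k\<in>Poly_Mapping.keys p. q0 \<le> k" unfolding q0_def by simp
  have kp: "\<forall>k\<in>Poly_Mapping.keys p. 0 < k \<and> k \<le> 1" using p unfolding II_def CC_def by auto
  have q0pos: "0 < q0" "q0 \<le> 1" using kp q0k by auto
  define h where "h = q0 / 2"
  define a where "a = p * Poly_Mapping.single (- h) (1::int)"
  define b where "b = Poly_Mapping.single h (1::int)"
  have "b \<in> II" unfolding b_def II_def CC_def h_def using q0pos by auto
  moreover have "a \<in> II"
  proof -
    have "0 \<le> k \<and> 0 < k \<and> k \<le> 1" if k: "k \<in> Poly_Mapping.keys a" for k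
    proof -
      obtain x y where "k = x + y" "x \<in> Poly_Mapping.keys p" "y \<in> Poly_Mapping.keys (Poly_Mapping.single (- h) (1::int))"
        using keys_mult[of p "Poly_Mapping.single (- h) (1::int)"] k unfolding a_def by blast
      then show ?thesis using kp q0le q0pos unfolding h_def by auto
    qed
    then show ?thesis unfolding II_def CC_def by auto
  qed
  moreover have "a * b = p"
    unfolding a_def b_def by (simp add: mult.assoc mult_single)
  ultimately show ?thesis using T_CC[OF II_CC[OF p]] by blast
qed

lemma Ig_idem: "idempotent_ideal Rg Ig"
proof -
  interpret R: cring Rg by (rule Rg_cring)
  have "ideal_prod Rg Ig Ig \<subseteq> Ig" using R.ideal_prod_inter[OF Ig_ideal Ig_ideal] by auto
  moreover have "Ig \<subseteq> ideal_prod Rg Ig Ig"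
  proof
    fix x assume "x \<in> Ig"
    then obtain p where p: "p \<in> II" "x = enc p" unfolding Ig_def by auto
    then obtain a b where ab: "a \<in> II" "b \<in> II" "T (a * b) = p" using II_split by blast
    have "enc a \<otimes>\<^bsub>Rg\<^esub> enc b \<in> ideal_prod Rg Ig Ig"
      by (rule ideal_prod.prod) (use ab in \<open>auto simp: Ig_def\<close>)
    then show "x \<in> ideal_prod Rg Ig Ig" using ab p by simp
  qed
  ultimately show ?thesis unfolding idempotent_ideal_def using Ig_ideal by auto
qed

primrec pw :: "pm \<Rightarrow> nat \<Rightarrow> pm" where
  "pw p 0 = 1"
| "pw p (Suc n) = T (pw p n * p)"

lemma Rg_pow: "p \<in> CC \<Longrightarrow> enc p [^]\<^bsub>Rg\<^esub> n = enc (pw p n)"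
  by (induct n) simp_all

lemma pw_keys_ge: assumes "\<forall>k\<in>Poly_Mapping.keys p. q0 \<le> k"
  shows "\<forall>k\<in>Poly_Mapping.keys (pw p n). of_nat n * q0 \<le> k"
proof (induct n)
  case 0 then show ?case by simp
next
  case (Suc n)
  have "\<forall>k\<in>Poly_Mapping.keys (pw p n * p). of_nat n * q0 + q0 \<le> k"
    by (rule keys_mult_ge) (use Suc assms in auto)
  then show ?case using keys_T[of "pw p n * p"] by (auto simp: algebra_simps)
qed

lemma pw_keys_le: "\<forall>k\<in>Poly_Mapping.keys (pw p n). k \<le> 1"
  by (cases n) (use keys_T in auto)

lemma II_nil: assumes p: "p \<in> II" shows "\<exists>n. pw p n = 0"
proof -
  obtain q0 :: rat where q0: "0 < q0" "\<forall>k\<in>Poly_Mapping.keys p. q0 \<le> k"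
  proof (cases "Poly_Mapping.keys p = {}")
    case True then show ?thesis using that[of 1] by auto
  next
    case False
    have "Min (Poly_Mapping.keys p) \<in> Poly_Mapping.keys p" using False by simp
    then have "0 < Min (Poly_Mapping.keys p)" using p unfolding II_def by auto
    then show ?thesis using that[of "Min (Poly_Mapping.keys p)"] by simp
  qed
  obtain n where n: "1 < of_nat n * q0" using ex_less_of_nat_mult[OF q0(1)] by blast
  have "Poly_Mapping.keys (pw p n) = {}"
  proof (rule equals0I)
    fix k assume k: "k \<in> Poly_Mapping.keys (pw p n)"
    have "of_nat n * q0 \<le> k" "k \<le> 1" using pw_keys_ge[OF q0(2), of n] pw_keys_le[of p n] k by auto
    then show False using n by linarith
  qed
  then show ?thesis by auto
qed

abbreviation Mrec :: "('a, 'b) ring_scheme \<Rightarrow> ('a, 'a) module" where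
  "Mrec R \<equiv> \<lparr>carrier = carrier R, mult = mult R, one = one R, zero = zero R,
             add = add R, smult = mult R\<rparr>"

lemma Mrec_module: assumes "cring R" shows "module R (Mrec R)"
proof -
  interpret R: cring R by fact
  have ag: "abelian_group (Mrec R)"
  proof (rule abelian_groupI, goal_cases)
    case (6 x) then show ?case by (intro bexI[of _ "\<ominus>\<^bsub>R\<^esub> x"]) (auto simp: R.l_neg)
  qed (auto simp: R.a_ac)
  show ?thesis
    by (rule moduleI[OF assms ag]) (auto simp: R.l_distr R.r_distr R.m_assoc)
qed



definition uu :: pm where "uu = Poly_Mapping.single 1 1"

lemma uu_II: "uu \<in> II" unfolding uu_def II_def CC_def by auto
lemma uu_nz: "enc uu \<noteq> enc 0"
proof
  assume "enc uu = enc 0"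
  then have "uu = 0" by (rule enc_inj)
  then have "Poly_Mapping.keys uu = {}" by simp
  then show False unfolding uu_def by simp
qed

lemma U_power: "enc uu \<in> ideal_power Rg Ig n"
proof (cases n)
  case 0 then show ?thesis using II_CC[OF uu_II] by simp
next
  case (Suc m)
  interpret R: cring Rg by (rule Rg_cring)
  have "ideal_power Rg Ig n = Ig" unfolding Suc by (rule R.ideal_power_idem[OF Ig_idem])
  then show ?thesis using uu_II unfolding Ig_def by simp
qed

lemma one_U: "enc uu \<otimes>\<^bsub>Rg\<^esub> enc 1 = enc uu"
  using T_CC[OF II_CC[OF uu_II]] by simp

lemma part_a2: "\<not> bounded_large_torsion Rg Ig (Mrec Rg)"
proof
  interpret R: cring Rg by (rule Rg_cring)
  assume "bounded_large_torsion Rg Ig (Mrec Rg)"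
  then obtain n where n: "ideal_smult Rg (ideal_power Rg Ig n) (Mrec Rg) (large_torsion Rg Ig (Mrec Rg)) = {enc 0}"
    unfolding bounded_large_torsion_def by auto
  have "Ig \<subseteq> radical Rg (annihilator Rg (Mrec Rg) (enc 1))"
  proof
    fix x assume x: "x \<in> Ig"
    then obtain p where p: "p \<in> II" "x = enc p" unfolding Ig_def by auto
    obtain m where m: "pw p m = 0" using II_nil[OF p(1)] by blast
    have xc: "x \<in> carrier Rg" using p II_CC by simp
    have pm: "x [^]\<^bsub>Rg\<^esub> m = enc 0" using Rg_pow[OF II_CC[OF p(1)], of m] m p by simp
    have "x [^]\<^bsub>Rg\<^esub> m \<in> annihilator Rg (Mrec Rg) (enc 1)"
      unfolding annihilator_def using pm CC_zero by (simp add: T_zero)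
    then show "x \<in> radical Rg (annihilator Rg (Mrec Rg) (enc 1))"
      unfolding radical_def using xc by blast
  qed
  then have "enc 1 \<in> large_torsion Rg Ig (Mrec Rg)"
    unfolding large_torsion_def using CC_one by simp
  then have "enc uu \<odot>\<^bsub>Mrec Rg\<^esub> enc 1 \<in> ideal_smult Rg (ideal_power Rg Ig n) (Mrec Rg) (large_torsion Rg Ig (Mrec Rg))"
    by (intro ismult_gen U_power)
  then have "enc uu \<in> {enc 0}" using n one_U by simp
  then show False using uu_nz by simp
qed

lemma part_a3: "\<not> strongly_bounded_small_torsion Rg Ig (Mrec Rg)"
proof
  assume "strongly_bounded_small_torsion Rg Ig (Mrec Rg)"
  then obtain n where n: "ideal_smult Rg (ideal_power Rg Ig n) (Mrec Rg) (carrier (Mrec Rg)) \<inter> small_torsion Rg Ig (Mrec Rg) = {enc 0}"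
    unfolding strongly_bounded_small_torsion_def by auto
  have Uc: "enc uu \<in> carrier Rg" using II_CC[OF uu_II] by simp
  have "enc uu \<odot>\<^bsub>Mrec Rg\<^esub> enc 1 \<in> ideal_smult Rg (ideal_power Rg Ig n) (Mrec Rg) (carrier (Mrec Rg))"
    by (intro ismult_gen U_power) (use CC_one in simp)
  then have U1: "enc uu \<in> ideal_smult Rg (ideal_power Rg Ig n) (Mrec Rg) (carrier (Mrec Rg))"
    using one_U by simp
  have ann: "ideal_power Rg Ig 1 \<subseteq> annihilator Rg (Mrec Rg) (enc uu)"
  proof
    interpret R: cring Rg by (rule Rg_cring)
    fix r assume "r \<in> ideal_power Rg Ig 1"
    then have "r \<in> Ig" using R.ideal_power_idem[OF Ig_idem, of 0] by simp
    then obtain p where p: "p \<in> II" "r = enc p" unfolding Ig_def by auto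
    have "\<forall>k\<in>Poly_Mapping.keys (p * uu). 0 + 1 < k"
      by (rule keys_mult_gt) (use p in \<open>auto simp: II_def uu_def\<close>)
    then have "T (p * uu) = 0" by (intro T_high) auto
    then show "r \<in> annihilator Rg (Mrec Rg) (enc uu)"
      unfolding annihilator_def using p II_CC by simp
  qed
  have "\<exists>n. ideal_power Rg Ig n \<subseteq> annihilator Rg (Mrec Rg) (enc uu)"
    using ann by (rule exI)
  then have "enc uu \<in> small_torsion Rg Ig (Mrec Rg)"
    unfolding small_torsion_def using Uc by simp
  then have "enc uu \<in> {enc 0}" using U1 n by blast
  then show False using uu_nz by simp
qed

theorem proposition7p5:
  shows
   "((\<forall>(R::'r ring) (I::'r set) (M::('r, 'm) module).
        module R M \<and> idempotent_ideal R I \<longrightarrow> bounded_small_torsion R I M)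
     \<and> (\<exists>(R::nat set ring) (I::nat set set) (M::(nat set, nat set) module).
        module R M \<and> idempotent_ideal R I \<and> \<not> bounded_large_torsion R I M)
     \<and> (\<exists>(R::nat set ring) (I::nat set set).
        cring R \<and> idempotent_ideal R I \<and>
        \<not> strongly_bounded_small_torsion R I
            \<lparr>carrier = carrier R, mult = mult R, one = one R, zero = zero R,
             add = add R, smult = mult R\<rparr>))
    \<and> (\<forall>(R::'r ring) (I::'r set) (M::('r, 'm) module).
        module R M \<and> ideal I R \<and> generated_by_idempotents R I \<longrightarrow>
        strongly_bounded_large_torsion R I M)"
proof (intro conjI allI impI)
  fix R :: "'r ring" and I and M :: "('r, 'm) module"
  assume "module R M \<and> idempotent_ideal R I"
  then show "bounded_small_torsion R I M" using part_a1 by blast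
next
  show "\<exists>(R::nat set ring) (I::nat set set) (M::(nat set, nat set) module).
        module R M \<and> idempotent_ideal R I \<and> \<not> bounded_large_torsion R I M"
    using Mrec_module[OF Rg_cring] Ig_idem part_a2 by blast
next
  show "\<exists>(R::nat set ring) (I::nat set set).
        cring R \<and> idempotent_ideal R I \<and>
        \<not> strongly_bounded_small_torsion R I
            \<lparr>carrier = carrier R, mult = mult R, one = one R, zero = zero R,
             add = add R, smult = mult R\<rparr>"
    using Rg_cring Ig_idem part_a3 by blast
next
  fix R :: "'r ring" and I and M :: "('r, 'm) module"
  assume "module R M \<and> ideal I R \<and> generated_by_idempotents R I"
  then show "strongly_bounded_large_torsion R I M" using part_b by blast
qed


end
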